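(* Let $n$ be a positive integer and let $(a_{i,j})_{0\le i\le n,\ 0\le j\le n-1}$ be an array of elements of a commutative ring. Then $$\det_{0\le i,j\le n-1}(a_{i,j}+a_{i+1,j})=\sum_{s=0}^{n}\det_{0\le i,j\le n-1}\bigl(a_{i+\chi(i\ge s),j}\bigr),$$ where $\chi(\mathcal S)=1$ if the statement $\mathcal S$ is true and $\chi(\mathcal S)=0$ otherwise. *)

theory Defs
  imports "Jordan_Normal_Form.Determinant"
begin

end

theory Submission
  imports Defs
begin

definition BB :: "nat \<Rightarrow> (nat \<Rightarrow> nat \<Rightarrow> 'a :: comm_ring_1) \<Rightarrow> nat \<Rightarrow> nat \<Rightarrow> 'a mat" where
  "BB n a k s = mat\<^sub>r n n (\<lambda>i. if i < k then vec n (a (i + (if i \<ge> s then 1 else 0)))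
                               else vec n (a i) + vec n (a (i+1)))"

lemma step:
  fixes a :: "nat \<Rightarrow> nat \<Rightarrow> 'a :: comm_ring_1"
  assumes k: "k < n" and s: "s \<le> k"
  shows "det (BB n a k s) = det (BB n a (Suc k) s) + (if s = k then det (BB n a (Suc k) (Suc k)) else 0)"
proof -
  define c where "c = (\<lambda>i. if i < k then vec n (a (i + (if i \<ge> s then 1 else 0)))
                               else vec n (a i) + vec n (a (i+1)))"
  have e0: "BB n a k s = mat\<^sub>r n n (\<lambda>i. if i = k then (\<lambda>_. vec n (a k)) i + (\<lambda>_. vec n (a (k+1))) i else c i)"
    unfolding BB_def c_def by (rule arg_cong[where f="mat\<^sub>r n n"]) auto
  have add: "det (BB n a k s) = det (mat\<^sub>r n n (\<lambda>i. if i = k then vec n (a k) else c i))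
     + det (mat\<^sub>r n n (\<lambda>i. if i = k then vec n (a (k+1)) else c i))"
    unfolding e0 by (rule det_row_add) (use k in \<open>auto simp: c_def\<close>)
  have e1: "mat\<^sub>r n n (\<lambda>i. if i = k then vec n (a (k+1)) else c i) = BB n a (Suc k) s"
    unfolding BB_def c_def using s by (intro arg_cong[where f="mat\<^sub>r n n"]) auto
  show ?thesis
  proof (cases "s = k")
    case True
    have "mat\<^sub>r n n (\<lambda>i. if i = k then vec n (a k) else c i) = BB n a (Suc k) (Suc k)"
      unfolding BB_def c_def using True by (intro arg_cong[where f="mat\<^sub>r n n"]) auto
    then show ?thesis using add e1 True by simp
  next
    case False
    hence sk: "s < k" using s by simp
    let ?A = "mat\<^sub>r n n (\<lambda>i. if i = k then vec n (a k) else c i)"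
    have "det ?A = 0"
    proof (rule det_identical_rows[of ?A n "k - 1" k])
      show "?A \<in> carrier_mat n n" by simp
      show "k - 1 \<noteq> k" using sk by simp
      show "k - 1 < n" "k < n" using k by auto
      have "k - 1 + 1 = k" "s \<le> k - 1" "k - 1 < k" using sk by auto
      then show "row ?A (k - 1) = row ?A k"
        using sk k by (simp add: c_def)
    qed
    then show ?thesis using add e1 False by simp
  qed
qed

lemma induct_claim:
  fixes a :: "nat \<Rightarrow> nat \<Rightarrow> 'a :: comm_ring_1"
  assumes "k \<le> n"
  shows "det (BB n a 0 0) = (\<Sum>s = 0..k. det (BB n a k s))"
  using assms
proof (induction k)
  case 0
  then show ?case by simp
next
  case (Suc k)
  have "det (BB n a 0 0) = (\<Sum>s = 0..k. det (BB n a k s))" using Suc by simp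
  also have "\<dots> = (\<Sum>s = 0..k. det (BB n a (Suc k) s) + (if s = k then det (BB n a (Suc k) (Suc k)) else 0))"
    by (rule sum.cong) (use Suc.prems step[of k n _ a] in \<open>auto\<close>)
  also have "\<dots> = (\<Sum>s = 0..k. det (BB n a (Suc k) s)) + det (BB n a (Suc k) (Suc k))"
    by (simp add: sum.distrib)
  also have "\<dots> = (\<Sum>s = 0..Suc k. det (BB n a (Suc k) s))" by simp
  finally show ?case .
qed

theorem lemma4:
  fixes n :: nat and a :: "nat \<Rightarrow> nat \<Rightarrow> 'a :: comm_ring_1"
  assumes "n \<ge> 1"
  shows "det (mat n n (\<lambda>(i, j). a i j + a (i + 1) j))
       = (\<Sum>s = 0..n. det (mat n n (\<lambda>(i, j). a (i + (if i \<ge> s then 1 else 0)) j)))"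
proof -
  have "mat n n (\<lambda>(i, j). a i j + a (i + 1) j) = BB n a 0 0"
    unfolding BB_def by (rule eq_matI) auto
  moreover have "\<And>s. mat n n (\<lambda>(i, j). a (i + (if i \<ge> s then 1 else 0)) j) = BB n a n s"
    unfolding BB_def by (rule eq_matI) auto
  ultimately show ?thesis using induct_claim[of n n a] by simp
qed

end
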